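(* Let $p$ be a prime, $d\ge 2$ and $n\ge 2p-1$. Let $N_p(\le n,p^d)=p^{d(n+1)}$ be the number of polynomials $a_nx^n+\cdots+a_1x+a_0$ with all $a_k\in\{0,\dots,p^d-1\}$, and let $N_{pp}(\le n,p^d)$ be the number of those which are permutation polynomials modulo $p^d$. Then $$\frac{N_{pp}(\le n,p^d)}{N_p(\le n,p^d)}=\frac{(p-1)^p\,(p-1)!}{p^{2p-1}}.$$
   Context: An integer polynomial $f$ is a permutation polynomial modulo $M$ if the map $x\mapsto f(x)\bmod M$ is a bijection of $\{0,\dots,M-1\}$. *)

theory Defs
  imports Complex_Main "HOL-Library.FuncSet" "HOL-Computational_Algebra.Primes"
begin

definition coeff_eval :: "nat \<Rightarrow> (nat \<Rightarrow> int) \<Rightarrow> int \<Rightarrow> int" where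
  "coeff_eval n a x = (\<Sum>k\<le>n. a k * x ^ k)"

definition is_perm_poly_mod :: "(int \<Rightarrow> int) \<Rightarrow> int \<Rightarrow> bool" where
  "is_perm_poly_mod f M = bij_betw (\<lambda>x. f x mod M) {0..<M} {0..<M}"

definition coeff_vectors :: "nat \<Rightarrow> int \<Rightarrow> (nat \<Rightarrow> int) set" where
  "coeff_vectors n M = {..n} \<rightarrow>\<^sub>E {0..<M}"

definition N_p :: "nat \<Rightarrow> int \<Rightarrow> nat" where
  "N_p n M = card (coeff_vectors n M)"

definition N_pp :: "nat \<Rightarrow> int \<Rightarrow> nat" where
  "N_pp n M = card {a \<in> coeff_vectors n M. is_perm_poly_mod (coeff_eval n a) M}"

end

theory Submission
  imports Defs "HOL-Computational_Algebra.Polynomial" "HOL-Number_Theory.Number_Theory" "HOL-Combinatorics.Permutations"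
begin

lemma taylor_int:
  fixes P :: "int poly"
  shows "h dvd poly P (x+h) - poly P x \<and> h^2 dvd poly P (x+h) - poly P x - h * poly (pderiv P) x"
proof (induct P)
  case 0
  then show ?case by simp
next
  case (pCons a P)
  obtain s where s: "poly P (x+h) - poly P x = h * s"
    using pCons by (meson dvdE)
  obtain t where t: "poly P (x+h) - poly P x - h * poly (pderiv P) x = h^2 * t"
    using pCons by (meson dvdE)
  have e1: "poly (pCons a P) (x+h) - poly (pCons a P) x = h * (x * s + poly P (x+h))"
    using s by (simp add: algebra_simps)
  have e2: "poly (pCons a P) (x+h) - poly (pCons a P) x - h * poly (pderiv (pCons a P)) x
      = h^2 * (x * t + s)"
  proof -
    have "poly (pCons a P) (x+h) - poly (pCons a P) x - h * poly (pderiv (pCons a P)) x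
        = x * (poly P (x+h) - poly P x - h * poly (pderiv P) x) + h * (poly P (x+h) - poly P x)"
      by (simp add: pderiv_pCons algebra_simps)
    also have "\<dots> = h^2 * (x * t + s)" using s t by (simp add: algebra_simps power2_eq_square)
    finally show ?thesis .
  qed
  show ?case using e1 e2 by simp
qed

lemma poly_cong_int:
  fixes P :: "int poly"
  assumes "[x = y] (mod m)"
  shows "[poly P x = poly P y] (mod m)"
proof -
  have "(y - x) dvd poly P y - poly P x" using taylor_int[of "y - x" P x] by simp
  moreover have "m dvd y - x" using assms by (simp add: cong_iff_dvd_diff dvd_diff_commute)
  ultimately have "m dvd poly P y - poly P x" using dvd_trans by blast
  then show ?thesis by (simp add: cong_iff_dvd_diff dvd_diff_commute)
qed

definition good :: "int \<Rightarrow> int poly \<Rightarrow> bool" where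
  "good p P = (inj_on (\<lambda>x. poly P x mod p) {0..<p} \<and> (\<forall>x\<in>{0..<p}. \<not> p dvd poly (pderiv P) x))"

lemma good_deriv:
  assumes "good p P" "p > 0"
  shows "\<not> p dvd poly (pderiv P) x"
proof
  assume "p dvd poly (pderiv P) x"
  moreover have "[poly (pderiv P) (x mod p) = poly (pderiv P) x] (mod p)"
    by (rule poly_cong_int) (simp add: cong_def)
  ultimately have "p dvd poly (pderiv P) (x mod p)"
    by (simp add: cong_dvd_iff)
  moreover have "x mod p \<in> {0..<p}" using assms(2) by simp
  ultimately show False using assms(1) unfolding good_def by blast
qed

lemma good_inj:
  assumes "good p P" "prime p"
  shows "[poly P x = poly P y] (mod p ^ Suc j) \<Longrightarrow> [x = y] (mod p ^ Suc j)"
proof (induct j arbitrary: x y)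
  case 0
  have p0: "p > 0" using assms(2) prime_gt_0_int by blast
  have c1: "[poly P (x mod p) = poly P x] (mod p)" "[poly P (y mod p) = poly P y] (mod p)"
    by (rule poly_cong_int, simp add: cong_def)+
  have c2: "[poly P x = poly P y] (mod p)" using 0 by simp
  have "[poly P (x mod p) = poly P (y mod p)] (mod p)"
    using cong_trans[OF cong_trans[OF c1(1) c2] cong_sym[OF c1(2)]] .
  then have "poly P (x mod p) mod p = poly P (y mod p) mod p" by (simp add: cong_def)
  moreover have "x mod p \<in> {0..<p}" "y mod p \<in> {0..<p}" using p0 by auto
  ultimately have "x mod p = y mod p" using assms(1) unfolding good_def inj_on_def by blast
  then show ?case by (simp add: cong_def)
next
  case (Suc j)
  have p0: "p > 0" using assms(2) prime_gt_0_int by blast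
  have dv: "p ^ Suc j dvd p ^ Suc (Suc j)" by (rule le_imp_power_dvd) simp
  have "[poly P x = poly P y] (mod p ^ Suc j)"
    using cong_dvd_modulus[OF Suc.prems dv] .
  then have "[x = y] (mod p ^ Suc j)" using Suc.hyps by blast
  then have "p ^ Suc j dvd y - x" by (simp add: cong_iff_dvd_diff dvd_diff_commute)
  then obtain u where u: "y - x = p ^ Suc j * u" by (rule dvdE)
  define h where "h = y - x"
  have hy: "y = x + h" unfolding h_def by simp
  have "h^2 dvd poly P (x+h) - poly P x - h * poly (pderiv P) x" using taylor_int by blast
  moreover have "p ^ Suc (Suc j) dvd h^2"
  proof -
    have "h^2 = (p ^ Suc j)^2 * u^2" unfolding h_def u by (simp add: power_mult_distrib)
    also have "(p ^ Suc j)^2 = p ^ (Suc j * 2)" by (simp only: power_mult)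
    also have "\<dots> = p ^ (Suc (Suc j) + j)" by (rule arg_cong[where f="\<lambda>k. p^k"]) simp
    also have "\<dots> = p ^ Suc (Suc j) * p ^ j" by (simp only: power_add)
    finally have "h^2 = p ^ Suc (Suc j) * (p ^ j * u^2)" by simp
    then show ?thesis by simp
  qed
  ultimately have A: "p ^ Suc (Suc j) dvd poly P y - poly P x - h * poly (pderiv P) x"
    unfolding hy using dvd_trans by blast
  have B: "p ^ Suc (Suc j) dvd poly P y - poly P x"
    using Suc.prems by (simp add: cong_iff_dvd_diff dvd_diff_commute)
  have "p ^ Suc (Suc j) dvd h * poly (pderiv P) x"
    using dvd_diff[OF B A] by simp
  moreover have "coprime p (poly (pderiv P) x)"
    using good_deriv[OF assms(1) p0] assms(2) prime_imp_coprime by blast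
  then have "coprime (p ^ Suc (Suc j)) (poly (pderiv P) x)"
    by simp
  ultimately have "p ^ Suc (Suc j) dvd h" using coprime_dvd_mult_left_iff by blast
  then show ?case unfolding h_def by (simp add: cong_iff_dvd_diff dvd_diff_commute)
qed

lemma criterion_if:
  assumes "prime p" "d \<ge> 1" "good p P"
  shows "is_perm_poly_mod (poly P) (p^d)"
proof -
  define M where "M = p^d"
  have p0: "p > 0" using assms(1) prime_gt_0_int by blast
  have M0: "M > 0" unfolding M_def using p0 by simp
  obtain j where j: "d = Suc j" using assms(2) by (cases d) auto
  have inj: "inj_on (\<lambda>x. poly P x mod M) {0..<M}"
  proof (rule inj_onI)
    fix x y assume xy: "x \<in> {0..<M}" "y \<in> {0..<M}" "poly P x mod M = poly P y mod M"
    then have "[poly P x = poly P y] (mod p ^ Suc j)" unfolding M_def j by (simp add: cong_def)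
    then have "[x = y] (mod p ^ Suc j)" using good_inj[OF assms(3,1)] by blast
    then show "x = y" using xy unfolding M_def j by (simp add: cong_def)
  qed
  have sub: "(\<lambda>x. poly P x mod M) ` {0..<M} \<subseteq> {0..<M}" using M0 by auto
  have "(\<lambda>x. poly P x mod M) ` {0..<M} = {0..<M}"
    using endo_inj_surj[OF _ sub inj] by simp
  then show ?thesis unfolding is_perm_poly_mod_def M_def[symmetric] bij_betw_def using inj by blast
qed

lemma criterion_only_if:
  assumes "prime p" "d \<ge> 2" "is_perm_poly_mod (poly P) (p^d)"
  shows "good p P"
proof -
  define M where "M = p^d"
  have p0: "p > 0" using assms(1) prime_gt_0_int by blast
  have p2: "p \<ge> 2" using assms(1) prime_ge_2_int by blast
  have M0: "M > 0" unfolding M_def using p0 by simp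
  have bij: "bij_betw (\<lambda>x. poly P x mod M) {0..<M} {0..<M}"
    using assms(3) unfolding is_perm_poly_mod_def M_def by simp
  have pdvdM: "p dvd M" unfolding M_def using assms(2) by (simp add: dvd_power)
  have pleM: "p \<le> M" using zdvd_imp_le[OF pdvdM M0] .
  have surj: "{0..<p} \<subseteq> (\<lambda>x. poly P x mod p) ` {0..<p}"
  proof
    fix z assume z: "z \<in> {0..<p}"
    then have "z \<in> {0..<M}" using pleM by auto
    then have "z \<in> (\<lambda>x. poly P x mod M) ` {0..<M}" using bij unfolding bij_betw_def by simp
    then obtain x where x: "x \<in> {0..<M}" "poly P x mod M = z" by blast
    have "[poly P (x mod p) = poly P x] (mod p)" by (rule poly_cong_int) (simp add: cong_def)
    then have "poly P (x mod p) mod p = poly P x mod p" by (simp add: cong_def)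
    also have "\<dots> = (poly P x mod M) mod p" using pdvdM by (simp add: mod_mod_cancel)
    also have "\<dots> = z" using x z by simp
    finally have "z = poly P (x mod p) mod p" by simp
    moreover have "x mod p \<in> {0..<p}" using p0 by simp
    ultimately show "z \<in> (\<lambda>x. poly P x mod p) ` {0..<p}" by blast
  qed
  have img: "(\<lambda>x. poly P x mod p) ` {0..<p} = {0..<p}" using surj p0 by auto
  have inj1: "inj_on (\<lambda>x. poly P x mod p) {0..<p}"
    by (rule eq_card_imp_inj_on) (simp_all add: img)
  have der: "\<not> p dvd poly (pderiv P) x" if x: "x \<in> {0..<p}" for x
  proof
    assume dv: "p dvd poly (pderiv P) x"
    define h where "h = p ^ (d - 1)"
    have hpos: "h > 0" unfolding h_def using p0 by simp
    have sd: "Suc (d-1) = d" using assms(2) by simp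
    have Mh: "M = p * h" unfolding M_def h_def by (metis sd power_Suc)
    have "h^2 dvd poly P (x+h) - poly P x - h * poly (pderiv P) x" using taylor_int by blast
    moreover have "M dvd h^2"
    proof -
      have "h^2 = p ^ ((d - 1) * 2)" unfolding h_def by (simp only: power_mult)
      moreover have "d \<le> (d - 1) * 2" using assms(2) by simp
      ultimately show ?thesis unfolding M_def by (simp add: le_imp_power_dvd)
    qed
    ultimately have A: "M dvd poly P (x+h) - poly P x - h * poly (pderiv P) x" using dvd_trans by blast
    have B: "M dvd h * poly (pderiv P) x" unfolding Mh using dv by (simp add: mult.commute mult_dvd_mono)
    have "M dvd poly P (x+h) - poly P x" using dvd_add[OF A B] by simp
    then have eq: "poly P (x+h) mod M = poly P x mod M" by (simp add: mod_eq_dvd_iff)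
    have "p \<le> h" unfolding h_def using assms(2) p0 by (intro self_le_power) auto
    moreover have "2*h \<le> p*h" using p2 hpos by simp
    ultimately have "x + h < p * h" using x by (simp only: atLeastLessThan_iff) linarith
    then have xh: "x + h \<in> {0..<M}" using x hpos unfolding Mh by auto
    have "x \<in> {0..<M}" using x pleM by auto
    then have "x + h = x" using bij xh eq unfolding bij_betw_def inj_on_def by blast
    then show False using hpos by simp
  qed
  show ?thesis unfolding good_def using inj1 der by blast
qed

lemma criterion:
  assumes "prime p" "d \<ge> 2"
  shows "is_perm_poly_mod (poly P) (p^d) \<longleftrightarrow> good p P"
  using criterion_if[OF assms(1) _] criterion_only_if[OF assms] assms(2) by auto

definition PO :: "nat set \<Rightarrow> (nat \<Rightarrow> int) \<Rightarrow> int poly" where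
  "PO A a = (\<Sum>k\<in>A. Polynomial.monom (a k) k)"

lemma poly_PO: "poly (PO A a) x = (\<Sum>k\<in>A. a k * x^k)"
  by (simp add: PO_def poly_sum poly_monom)

lemma coeff_eval_PO: "coeff_eval n a = poly (PO {..n} a)"
  by (rule ext) (simp add: coeff_eval_def poly_PO)

lemma smult_sum_right: "Polynomial.smult c (sum f A) = (\<Sum>i\<in>A. Polynomial.smult c (f i))"
  by (induct A rule: infinite_finite_induct) (simp_all add: smult_add_right)

lemma PO_lin: "PO A (\<lambda>k. b k + c * q k) = PO A b + Polynomial.smult c (PO A q)"
  by (simp add: PO_def smult_sum_right sum.distrib add_monom[symmetric] smult_monom)

lemma PO_cong: "(\<And>k. k \<in> A \<Longrightarrow> a k = b k) \<Longrightarrow> PO A a = PO A b"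
  unfolding PO_def by (rule sum.cong) auto

lemma PO_restrict: "PO A (restrict h A) = PO A h"
  by (rule PO_cong) simp

lemma restrict_inner: "restrict (\<lambda>k. F (restrict h A k)) A = restrict (\<lambda>k. F (h k)) A"
  by (rule restrict_ext) simp

lemma good_cong: "good p (P + Polynomial.smult p R) = good p P"
proof -
  have 1: "poly (P + Polynomial.smult p R) x mod p = poly P x mod p" for x by simp
  have 2: "p dvd poly (pderiv (P + Polynomial.smult p R)) x \<longleftrightarrow> p dvd poly (pderiv P) x" for x
    by (simp add: pderiv_add pderiv_smult dvd_add_left_iff)
  show ?thesis unfolding good_def 1 2 ..
qed

lemma card_cv: "m \<ge> 0 \<Longrightarrow> card (coeff_vectors n m) = nat m ^ Suc n"
  unfolding coeff_vectors_def by (simp add: card_funcsetE)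

lemma finite_cv: "finite (coeff_vectors n m)"
  unfolding coeff_vectors_def by (simp add: finite_PiE)

lemma count_lift:
  assumes p: "prime p" and d: "d \<ge> 1"
  shows "card {a \<in> coeff_vectors n (p^d). good p (PO {..n} a)}
       = card {b \<in> coeff_vectors n p. good p (PO {..n} b)} * nat p ^ ((d-1) * Suc n)"
proof -
  define G where "G = {b \<in> coeff_vectors n p. good p (PO {..n} b)}"
  define Q where "Q = coeff_vectors n (p^(d-1))"
  define T where "T = {a \<in> coeff_vectors n (p^d). good p (PO {..n} a)}"
  have p0: "p > 0" using p prime_gt_0_int by blast
  have sd: "Suc (d-1) = d" using d by simp
  have pd: "p^d = p * p^(d-1)" by (metis sd power_Suc)
  define f where "f = (\<lambda>(b,q). restrict (\<lambda>k. b k + p * q k) {..n})"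
  define g where "g = (\<lambda>a. (restrict (\<lambda>k. a k mod p) {..n}, restrict (\<lambda>k. a k div p) {..n}))"
  have POf: "PO {..n} (f (b,q)) = PO {..n} b + Polynomial.smult p (PO {..n} q)" for b q
  proof -
    have "PO {..n} (f (b,q)) = PO {..n} (\<lambda>k. b k + p * q k)" unfolding f_def by (rule PO_cong) simp
    then show ?thesis by (simp add: PO_lin)
  qed
  have POa: "PO {..n} a = PO {..n} (fst (g a)) + Polynomial.smult p (PO {..n} (snd (g a)))" for a
  proof -
    have "PO {..n} a = PO {..n} (\<lambda>k. a k mod p + p * (a k div p))" by (rule PO_cong) simp
    also have "\<dots> = PO {..n} (fst (g a)) + Polynomial.smult p (PO {..n} (snd (g a)))"
      unfolding PO_lin g_def by (simp only: fst_conv snd_conv PO_restrict)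
    finally show ?thesis .
  qed
  have bij: "bij_betw f (G \<times> Q) T"
  proof (rule bij_betwI[where g = g])
    show "f \<in> G \<times> Q \<rightarrow> T"
    proof
      fix x assume "x \<in> G \<times> Q"
      then obtain b q where x: "x = (b,q)" "b \<in> G" "q \<in> Q" by auto
      have range: "b k + p * q k \<in> {0..<p^d}" if "k \<le> n" for k
      proof -
        have bk: "0 \<le> b k" "b k < p" using x(2) that unfolding G_def coeff_vectors_def by auto
        have qk: "0 \<le> q k" "q k < p^(d-1)" using x(3) that unfolding Q_def coeff_vectors_def by auto
        have "q k \<le> p^(d-1) - 1" using qk by simp
        then have "p * q k \<le> p * (p^(d-1) - 1)" using p0 by (simp add: mult_left_mono)
        then show ?thesis using bk qk p0 unfolding pd by (simp add: algebra_simps)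
      qed
      have "f x \<in> coeff_vectors n (p^d)" unfolding coeff_vectors_def f_def x using range by auto
      moreover have "good p (PO {..n} (f x))" using x(2) unfolding x POf G_def good_cong by simp
      ultimately show "f x \<in> T" unfolding T_def by simp
    qed
    show "g \<in> T \<rightarrow> G \<times> Q"
    proof
      fix a assume a: "a \<in> T"
      have ak: "0 \<le> a k" "a k < p^d" if "k \<le> n" for k using a that unfolding T_def coeff_vectors_def by auto
      have "fst (g a) \<in> coeff_vectors n p" unfolding g_def coeff_vectors_def using p0 by auto
      moreover have "good p (PO {..n} (fst (g a)))"
      proof -
        have "good p (PO {..n} a)" using a unfolding T_def by simp
        then have "good p (PO {..n} (fst (g a)) + Polynomial.smult p (PO {..n} (snd (g a))))"
          by (simp only: POa[of a, symmetric])
        then show ?thesis by (simp only: good_cong)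
      qed
      moreover have "snd (g a) \<in> Q"
      proof -
        have "a k div p \<in> {0..<p^(d-1)}" if "k \<le> n" for k
        proof -
          have a1: "0 \<le> a k" "a k < p * p^(d-1)" using ak[OF that] unfolding pd by auto
          have e: "a k = p * (a k div p) + a k mod p" by simp
          have m: "a k mod p \<ge> 0" using p0 by simp
          have "a k div p < p^(d-1)"
          proof (rule ccontr)
            assume "\<not> a k div p < p^(d-1)"
            then have "p * p^(d-1) \<le> p * (a k div p)" using p0 by (simp add: mult_left_mono)
            then show False using a1 e m by linarith
          qed
          moreover have "0 \<le> a k div p" using a1 p0 by (simp add: pos_imp_zdiv_nonneg_iff)
          ultimately show ?thesis by simp
        qed
        then show ?thesis unfolding Q_def g_def coeff_vectors_def by auto
      qed
      ultimately show "g a \<in> G \<times> Q" unfolding G_def by (simp add: mem_Times_iff)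
    qed
    show "g (f x) = x" if xin: "x \<in> G \<times> Q" for x
    proof -
      obtain b q where x: "x = (b,q)" "b \<in> G" "q \<in> Q" using xin by blast
      have bk: "0 \<le> b k" "b k < p" if "k \<le> n" for k using x(2) that unfolding G_def coeff_vectors_def by auto
      have eb: "b k = undefined" "q k = undefined" if "\<not> k \<le> n" for k
        using x(2,3) that unfolding G_def Q_def coeff_vectors_def by (auto simp: PiE_def extensional_def)
      have 1: "restrict (\<lambda>k. (b k + p * q k) mod p) {..n} = b"
      proof
        fix k show "restrict (\<lambda>k. (b k + p * q k) mod p) {..n} k = b k"
          using bk[of k] eb[of k] by auto
      qed
      have 2: "restrict (\<lambda>k. (b k + p * q k) div p) {..n} = q"
      proof
        fix k show "restrict (\<lambda>k. (b k + p * q k) div p) {..n} k = q k"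
          using bk[of k] eb[of k] p0 by (auto simp: div_add1_eq)
      qed
      have "g (f (b,q)) = (restrict (\<lambda>k. (b k + p * q k) mod p) {..n}, restrict (\<lambda>k. (b k + p * q k) div p) {..n})"
        unfolding f_def g_def by (simp only: case_prod_conv restrict_inner[where F="\<lambda>v. v mod p"] restrict_inner[where F="\<lambda>v. v div p"])
      then show ?thesis unfolding x(1) using 1 2 by (simp only:)
    qed
    show "f (g a) = a" if "a \<in> T" for a
    proof
      fix k
      have ea: "a k = undefined" if "\<not> k \<le> n"
        using \<open>a \<in> T\<close> that unfolding T_def coeff_vectors_def by (auto simp: PiE_def extensional_def)
      show "f (g a) k = a k" unfolding f_def g_def using ea by auto
    qed
  qed
  have "card T = card (G \<times> Q)" using bij_betw_same_card[OF bij] by simp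
  also have "\<dots> = card G * card Q" by (rule card_cartesian_product)
  also have "card Q = nat p ^ ((d-1) * Suc n)" unfolding Q_def using p0
    by (simp add: card_cv nat_power_eq power_mult power_add power_Suc)
  finally show ?thesis unfolding T_def G_def .
qed

lemma fermat_int:
  assumes p: "prime p" and a: "\<not> int p dvd a"
  shows "[a ^ (p - 1) = 1] (mod int p)"
proof -
  have p0: "p > 0" using p prime_gt_0_nat by blast
  define a' where "a' = nat (a mod int p)"
  have ia: "int a' = a mod int p" unfolding a'_def using p0 by simp
  have "\<not> p dvd a'"
  proof
    assume "p dvd a'"
    then have "int p dvd a mod int p" using ia by (metis int_dvd_int_iff)
    then show False using a by (simp add: dvd_mod_iff)
  qed
  then have "[a' ^ (p - 1) = 1] (mod p)" using fermat_theorem p by blast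
  then have "[int a' ^ (p - 1) = 1] (mod int p)" using cong_int_iff by (metis of_nat_1 of_nat_power)
  then have "[(a mod int p) ^ (p - 1) = 1] (mod int p)" using ia by simp
  moreover have "[a ^ (p - 1) = (a mod int p) ^ (p - 1)] (mod int p)"
    by (rule cong_pow) (simp add: cong_def)
  ultimately show ?thesis using cong_trans by blast
qed

lemma fermat_int2:
  assumes p: "prime p"
  shows "int p dvd c ^ p - c"
proof (cases "int p dvd c")
  case True
  have p0: "p > 0" using p prime_gt_0_nat by blast
  then have "int p dvd c ^ p" using True by (simp add: dvd_power_iff_le dvd_trans[OF True] dvd_power)
  then show ?thesis using True by simp
next
  case False
  have p0: "p > 0" using p prime_gt_0_nat by blast
  have "[c ^ (p - 1) = 1] (mod int p)" using fermat_int[OF p False] .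
  then have "[c * c ^ (p - 1) = c * 1] (mod int p)" by (rule cong_scalar_left)
  moreover have "c * c ^ (p - 1) = c ^ p" using p0 by (metis Suc_diff_1 power_Suc)
  ultimately have "[c ^ p = c] (mod int p)" by simp
  then show ?thesis by (simp add: cong_iff_dvd_diff)
qed

lemma interp:
  assumes p: "prime p"
  shows "\<exists>G::int poly. degree G \<le> p - 1 \<and> (\<forall>c\<in>{0..<int p}. [poly G c = V c] (mod int p))"
proof -
  have p2: "p \<ge> 2" using p prime_ge_2_nat by blast
  define G where "G = (\<Sum>c\<in>{0..<int p}. Polynomial.smult (V c) (1 - [:-c, 1:]^(p-1)))"
  have "degree G \<le> p - 1" unfolding G_def
  proof (rule degree_sum_le)
    fix c :: int
    have "degree (1 - [:-c, 1:]^(p-1)) \<le> p - 1"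
      by (rule degree_diff_le) (simp_all add: degree_linear_power)
    then show "degree (Polynomial.smult (V c) (1 - [:-c, 1:]^(p-1))) \<le> p - 1"
      using degree_smult_le order_trans by blast
  qed simp
  moreover have "[poly G x = V x] (mod int p)" if x: "x \<in> {0..<int p}" for x
  proof -
    define f where "f = (\<lambda>c. V c * (1 - (x - c)^(p-1)))"
    have pG: "poly G x = (\<Sum>c\<in>{0..<int p}. f c)" unfolding G_def f_def
      by (simp add: poly_sum)
    also have "\<dots> = f x + (\<Sum>c\<in>{0..<int p} - {x}. f c)"
      using x by (simp add: sum.remove)
    also have "f x = V x" unfolding f_def using p2 by simp
    finally have e: "poly G x = V x + (\<Sum>c\<in>{0..<int p} - {x}. f c)" .
    have "[(\<Sum>c\<in>{0..<int p} - {x}. f c) = (\<Sum>c\<in>{0..<int p} - {x}. 0)] (mod int p)"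
    proof (rule cong_sum)
      fix c assume c: "c \<in> {0..<int p} - {x}"
      have "\<not> int p dvd (x - c)"
      proof
        assume "int p dvd (x - c)"
        then have "[x = c] (mod int p)" by (simp add: cong_iff_dvd_diff)
        then have "x = c" using x c by (simp add: cong_def)
        then show False using c by simp
      qed
      then have "[(x - c)^(p-1) = 1] (mod int p)" using fermat_int[OF p] by blast
      then have "[1 - (x - c)^(p-1) = 1 - 1] (mod int p)" by (intro cong_diff cong_refl)
      then have "[V c * (1 - (x - c)^(p-1)) = V c * 0] (mod int p)" by (intro cong_scalar_left) simp
      then show "[f c = 0] (mod int p)" unfolding f_def by simp
    qed
    then have "[V x + (\<Sum>c\<in>{0..<int p} - {x}. f c) = V x + 0] (mod int p)"
      by (intro cong_add cong_refl) simp
    then show ?thesis unfolding e by simp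
  qed
  ultimately show ?thesis by blast
qed

lemma hermite:
  assumes p: "prime p"
  shows "\<exists>P::int poly. degree P < 2 * p \<and> (\<forall>c\<in>{0..<int p}. [poly P c = V c] (mod int p)
           \<and> [poly (pderiv P) c = W c] (mod int p))"
proof -
  have p2: "p \<ge> 2" using p prime_ge_2_nat by blast
  obtain G where G: "degree G \<le> p - 1" "\<And>c. c \<in> {0..<int p} \<Longrightarrow> [poly G c = V c] (mod int p)"
    using interp[OF p, of V] by blast
  obtain H where H: "degree H \<le> p - 1"
    "\<And>c. c \<in> {0..<int p} \<Longrightarrow> [poly H c = poly (pderiv G) c - W c] (mod int p)"
    using interp[OF p, of "\<lambda>c. poly (pderiv G) c - W c"] by blast
  define X :: "int poly" where "X = Polynomial.monom 1 p - [:0, 1:]"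
  define P where "P = G + X * H"
  have dX: "degree X \<le> p" unfolding X_def
    by (rule degree_diff_le) (use p2 in \<open>simp_all add: degree_monom_le\<close>)
  have "degree (X * H) \<le> p + (p - 1)" using degree_mult_le[of X H] dX H(1) by linarith
  then have "degree P \<le> p + (p - 1)" unfolding P_def using G(1) degree_add_le by (metis le_add2 le_trans)
  then have dP: "degree P < 2 * p" using p2 by linarith
  have pX: "poly X c = c ^ p - c" for c unfolding X_def by (simp add: poly_monom)
  have pdX: "poly (pderiv X) c = int p * c ^ (p - 1) - 1" for c
    unfolding X_def by (simp add: pderiv_diff pderiv_monom poly_monom pderiv_pCons)
  have "[poly P c = V c] (mod int p) \<and> [poly (pderiv P) c = W c] (mod int p)" if c: "c \<in> {0..<int p}" for c
  proof
    have d1: "int p dvd c ^ p - c" using fermat_int2[OF p] .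
    have "poly P c = poly G c + (c ^ p - c) * poly H c" unfolding P_def by (simp add: pX)
    then have "[poly P c = poly G c] (mod int p)" using d1 by (simp add: cong_iff_dvd_diff)
    then show "[poly P c = V c] (mod int p)" using G(2)[OF c] cong_trans by blast
    have e: "poly (pderiv P) c - W c = (c ^ p - c) * poly (pderiv H) c + int p * (c ^ (p - 1) * poly H c)
              + (poly (pderiv G) c - W c - poly H c)"
      unfolding P_def by (simp add: pderiv_add pderiv_mult pX pdX algebra_simps)
    have d2: "int p dvd poly (pderiv G) c - W c - poly H c"
      using H(2)[OF c] by (simp add: cong_iff_dvd_diff dvd_diff_commute)
    have "int p dvd poly (pderiv P) c - W c" unfolding e
      using d1 d2 by (intro dvd_add dvd_mult2) simp_all
    then show "[poly (pderiv P) c = W c] (mod int p)" by (simp add: cong_iff_dvd_diff)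
  qed
  then show ?thesis using dP by blast
qed

definition Phi :: "int \<Rightarrow> int poly \<Rightarrow> (int \<Rightarrow> int) \<times> (int \<Rightarrow> int)" where
  "Phi q P = (restrict (\<lambda>c. poly P c mod q) {0..<q}, restrict (\<lambda>c. poly (pderiv P) c mod q) {0..<q})"

definition Perm :: "int \<Rightarrow> (int \<Rightarrow> int) set" where
  "Perm q = {v \<in> {0..<q} \<rightarrow>\<^sub>E {0..<q}. inj_on v {0..<q}}"

definition NZ :: "int \<Rightarrow> (int \<Rightarrow> int) set" where
  "NZ q = {0..<q} \<rightarrow>\<^sub>E {1..<q}"

lemma Phi_cong: "Phi q (P + Polynomial.smult q R) = Phi q P"
  unfolding Phi_def by (simp add: pderiv_add pderiv_smult)

lemma good_Phi:
  assumes "q > 0"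
  shows "good q P \<longleftrightarrow> Phi q P \<in> Perm q \<times> NZ q"
proof -
  have 1: "inj_on (\<lambda>x. poly P x mod q) {0..<q} \<longleftrightarrow> inj_on (restrict (\<lambda>c. poly P c mod q) {0..<q}) {0..<q}"
    by (rule inj_on_cong) simp
  have 2: "(\<forall>x\<in>{0..<q}. \<not> q dvd poly (pderiv P) x) \<longleftrightarrow>
      restrict (\<lambda>c. poly (pderiv P) c mod q) {0..<q} \<in> {0..<q} \<rightarrow>\<^sub>E {1..<q}"
  proof -
    have "\<not> q dvd y \<longleftrightarrow> y mod q \<in> {1..<q}" for y
    proof -
      have "0 \<le> y mod q" "y mod q < q" using assms by simp_all
      then show ?thesis by (auto simp: dvd_eq_mod_eq_0)
    qed
    then show ?thesis by (auto simp: PiE_def Pi_def)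
  qed
  have 3: "restrict (\<lambda>c. poly P c mod q) {0..<q} \<in> {0..<q} \<rightarrow>\<^sub>E {0..<q}" using assms by auto
  show ?thesis unfolding good_def Phi_def Perm_def NZ_def using 1 2 3 by auto
qed

lemma bij_restrict_to:
  assumes "bij_betw f A B" "S \<subseteq> B"
  shows "bij_betw f {a \<in> A. f a \<in> S} S"
proof -
  have "inj_on f {a \<in> A. f a \<in> S}" using assms(1) unfolding bij_betw_def
    by (rule inj_on_subset[OF conjunct1]) auto
  moreover have "f ` {a \<in> A. f a \<in> S} = S"
  proof
    show "f ` {a \<in> A. f a \<in> S} \<subseteq> S" by auto
    show "S \<subseteq> f ` {a \<in> A. f a \<in> S}"
    proof
      fix s assume "s \<in> S"
      then have "s \<in> f ` A" using assms unfolding bij_betw_def by auto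
      then obtain a where "a \<in> A" "s = f a" by auto
      then show "s \<in> f ` {a \<in> A. f a \<in> S}" using \<open>s \<in> S\<close> by auto
    qed
  qed
  ultimately show ?thesis unfolding bij_betw_def by simp
qed

lemma card_Perm:
  assumes "q \<ge> 0"
  shows "card (Perm q) = fact (nat q)"
proof -
  define A where "A = {0..<q}"
  have "bij_betw (\<lambda>\<pi>. restrict \<pi> A) {\<pi>. \<pi> permutes A} (Perm q)"
  proof (rule bij_betwI[where g = "\<lambda>v x. if x \<in> A then v x else x"])
    show "(\<lambda>\<pi>. restrict \<pi> A) \<in> {\<pi>. \<pi> permutes A} \<rightarrow> Perm q"
    proof
      fix \<pi> assume "\<pi> \<in> {\<pi>. \<pi> permutes A}"
      then have b: "bij_betw \<pi> A A" using permutes_imp_bij by blast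
      then have "restrict \<pi> A \<in> A \<rightarrow>\<^sub>E A" unfolding bij_betw_def by auto
      moreover have "inj_on (restrict \<pi> A) A" using b unfolding bij_betw_def
        by (metis inj_on_cong restrict_apply')
      ultimately show "restrict \<pi> A \<in> Perm q" unfolding Perm_def A_def by simp
    qed
    show "(\<lambda>v x. if x \<in> A then v x else x) \<in> Perm q \<rightarrow> {\<pi>. \<pi> permutes A}"
    proof
      fix v assume v: "v \<in> Perm q"
      then have vA: "v ` A \<subseteq> A" "inj_on v A" unfolding Perm_def A_def by auto
      have "v ` A = A" using endo_inj_surj[OF _ vA] unfolding A_def by simp
      then have "bij_betw v A A" using vA unfolding bij_betw_def by simp
      then have "bij_betw (\<lambda>x. if x \<in> A then v x else x) A A"
        by (rule bij_betw_cong[THEN iffD1, rotated]) simp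
      then show "(\<lambda>x. if x \<in> A then v x else x) \<in> {\<pi>. \<pi> permutes A}"
        by (auto intro: bij_imp_permutes)
    qed
    show "(\<lambda>x. if x \<in> A then restrict \<pi> A x else x) = \<pi>" if "\<pi> \<in> {\<pi>. \<pi> permutes A}" for \<pi>
      using that by (auto simp: permutes_def)
    show "restrict (\<lambda>x. if x \<in> A then v x else x) A = v" if "v \<in> Perm q" for v
      using that unfolding Perm_def A_def by (auto simp: PiE_def extensional_def fun_eq_iff)
  qed
  then have "card (Perm q) = card {\<pi>. \<pi> permutes A}" using bij_betw_same_card by metis
  also have "\<dots> = fact (nat q)" by (rule card_permutations) (simp_all add: A_def)
  finally show ?thesis .
qed

lemma card_NZ: "q \<ge> 0 \<Longrightarrow> card (NZ q) = (nat q - 1) ^ nat q"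
proof -
  have "nat (q - 1) = nat q - 1" by (cases "q \<ge> 1") auto
  then show ?thesis unfolding NZ_def by (simp add: card_funcsetE)
qed

lemma PO_coeff:
  assumes "degree P < L"
  shows "PO {..<L} (poly.coeff P) = P"
proof -
  have L: "{..<L} = {..L - 1}" using assms by auto
  show ?thesis unfolding PO_def L by (rule poly_as_sum_of_monoms') (use assms in linarith)
qed

lemma fiber:
  assumes p: "prime p" and L: "L = 2 * p"
  shows "bij_betw (\<lambda>l. Phi (int p) (PO {..<L} l + Hh)) ({..<L} \<rightarrow>\<^sub>E {0..<int p})
           (({0..<int p} \<rightarrow>\<^sub>E {0..<int p}) \<times> ({0..<int p} \<rightarrow>\<^sub>E {0..<int p}))"
proof -
  define q where "q = int p"
  define Low where "Low = {..<L} \<rightarrow>\<^sub>E {0..<q}"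
  define Fp where "Fp = {0..<q} \<rightarrow>\<^sub>E {0..<q}"
  define \<psi> where "\<psi> = (\<lambda>l. Phi q (PO {..<L} l + Hh))"
  have q0: "q > 0" unfolding q_def using p prime_gt_0_nat by simp
  have sub: "\<psi> ` Low \<subseteq> Fp \<times> Fp" unfolding \<psi>_def Phi_def Fp_def using q0 by auto
  have sup: "Fp \<times> Fp \<subseteq> \<psi> ` Low"
  proof
    fix vw assume "vw \<in> Fp \<times> Fp"
    then obtain v w where vw: "vw = (v, w)" "v \<in> Fp" "w \<in> Fp" by auto
    obtain P where P: "degree P < 2 * p"
      "\<And>c. c \<in> {0..<q} \<Longrightarrow> [poly P c = v c - poly Hh c] (mod q)"
      "\<And>c. c \<in> {0..<q} \<Longrightarrow> [poly (pderiv P) c = w c - poly (pderiv Hh) c] (mod q)"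
      using hermite[OF p, of "\<lambda>c. v c - poly Hh c" "\<lambda>c. w c - poly (pderiv Hh) c"]
      unfolding q_def by blast
    define l where "l = restrict (\<lambda>k. poly.coeff P k mod q) {..<L}"
    have lLow: "l \<in> Low" unfolding l_def Low_def using q0 by auto
    have md: "poly.coeff P k mod q = poly.coeff P k + q * (- (poly.coeff P k div q))" for k
      using minus_mult_div_eq_mod[of "poly.coeff P k" q] by simp
    have "PO {..<L} l = PO {..<L} (\<lambda>k. poly.coeff P k + q * (- (poly.coeff P k div q)))"
      unfolding l_def PO_restrict using md by simp
    also have "\<dots> = P + Polynomial.smult q (PO {..<L} (\<lambda>k. - (poly.coeff P k div q)))"
      unfolding PO_lin using PO_coeff[of P L] P(1) L by simp
    finally have POl: "PO {..<L} l = P + Polynomial.smult q (PO {..<L} (\<lambda>k. - (poly.coeff P k div q)))" .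
    have "\<psi> l = Phi q (P + Hh)"
    proof -
      have "PO {..<L} l + Hh = (P + Hh) + Polynomial.smult q (PO {..<L} (\<lambda>k. - (poly.coeff P k div q)))"
        unfolding POl by (simp add: algebra_simps)
      then show ?thesis unfolding \<psi>_def by (simp only: Phi_cong)
    qed
    also have "Phi q (P + Hh) = (v, w)"
    proof -
      have 1: "restrict (\<lambda>c. poly (P + Hh) c mod q) {0..<q} = v"
      proof
        fix c
        show "restrict (\<lambda>c. poly (P + Hh) c mod q) {0..<q} c = v c"
        proof (cases "c \<in> {0..<q}")
          case True
          have "poly (P + Hh) c mod q = (poly P c mod q + poly Hh c) mod q" by (simp add: mod_add_left_eq)
          also have "poly P c mod q = (v c - poly Hh c) mod q" using P(2)[OF True] by (simp add: cong_def)
          also have "((v c - poly Hh c) mod q + poly Hh c) mod q = v c mod q" by (simp add: mod_add_left_eq)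
          also have "v c mod q = v c" using PiE_mem[OF vw(2)[unfolded Fp_def] True] by simp
          finally show ?thesis using True by simp
        next
          case False
          then show ?thesis using vw(2) unfolding Fp_def by (auto simp: PiE_def extensional_def)
        qed
      qed
      have 2: "restrict (\<lambda>c. poly (pderiv (P + Hh)) c mod q) {0..<q} = w"
      proof
        fix c
        show "restrict (\<lambda>c. poly (pderiv (P + Hh)) c mod q) {0..<q} c = w c"
        proof (cases "c \<in> {0..<q}")
          case True
          have "poly (pderiv (P + Hh)) c mod q = (poly (pderiv P) c mod q + poly (pderiv Hh) c) mod q"
            by (simp add: mod_add_left_eq pderiv_add)
          also have "poly (pderiv P) c mod q = (w c - poly (pderiv Hh) c) mod q" using P(3)[OF True] by (simp add: cong_def)
          also have "((w c - poly (pderiv Hh) c) mod q + poly (pderiv Hh) c) mod q = w c mod q" by (simp add: mod_add_left_eq)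
          also have "w c mod q = w c" using PiE_mem[OF vw(3)[unfolded Fp_def] True] by simp
          finally show ?thesis using True by simp
        next
          case False
          then show ?thesis using vw(3) unfolding Fp_def by (auto simp: PiE_def extensional_def)
        qed
      qed
      show ?thesis unfolding Phi_def 1 2 ..
    qed
    finally show "vw \<in> \<psi> ` Low" using lLow vw(1) by (metis image_eqI)
  qed
  have img: "\<psi> ` Low = Fp \<times> Fp" using sub sup by blast
  have cL: "card Low = p ^ (2 * p)" unfolding Low_def L q_def by (simp add: card_funcsetE)
  have cF: "card (Fp \<times> Fp) = p ^ (2 * p)" unfolding Fp_def q_def
    by (simp add: card_funcsetE card_cartesian_product mult_2 power_add)
  have fin: "finite Low" unfolding Low_def by (simp add: finite_PiE)
  have "inj_on \<psi> Low" by (rule eq_card_imp_inj_on[OF fin]) (simp add: img cL cF)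
  then have "bij_betw \<psi> Low (Fp \<times> Fp)" unfolding bij_betw_def using img by simp
  then show ?thesis unfolding \<psi>_def Low_def Fp_def q_def .
qed

lemma count_low:
  assumes p: "prime p" and n: "2 * p \<le> Suc n"
  shows "card {b \<in> coeff_vectors n (int p). good (int p) (PO {..n} b)}
         = p ^ (Suc n - 2 * p) * (fact p * (p - 1) ^ p)"
proof -
  define q where "q = int p"
  define L where "L = 2 * p"
  define Low where "Low = {..<L} \<rightarrow>\<^sub>E {0..<q}"
  define High where "High = {L..n} \<rightarrow>\<^sub>E {0..<q}"
  define Fp where "Fp = {0..<q} \<rightarrow>\<^sub>E {0..<q}"
  define S where "S = Perm q \<times> NZ q"
  define merge where "merge = (\<lambda>l h. (\<lambda>k::nat. if k < L then l k else h k :: int))"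
  define T where "T = {b \<in> coeff_vectors n q. good q (PO {..n} b)}"
  define B where "B = (\<lambda>h. {l \<in> Low. good q (PO {..n} (merge l h))})"
  have q0: "q > 0" unfolding q_def using p prime_gt_0_nat by simp
  have Ln: "L \<le> Suc n" unfolding L_def using n .
  have split: "PO {..n} b = PO {..<L} b + PO {L..n} b" for b
  proof -
    have "{..n} = {..<L} \<union> {L..n}" using Ln by auto
    moreover have "{..<L} \<inter> {L..n} = {}" by auto
    ultimately show ?thesis unfolding PO_def by (simp add: sum.union_disjoint[symmetric])
  qed
  have PO_merge: "PO {..n} (merge l h) = PO {..<L} l + PO {L..n} h" for l h
  proof -
    have "PO {..<L} (merge l h) = PO {..<L} l" by (rule PO_cong) (simp add: merge_def)
    moreover have "PO {L..n} (merge l h) = PO {L..n} h" by (rule PO_cong) (simp add: merge_def)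
    ultimately show ?thesis using split by simp
  qed
  have Sub: "S \<subseteq> Fp \<times> Fp"
  proof -
    have "Perm q \<subseteq> Fp" unfolding Perm_def Fp_def by auto
    moreover have "NZ q \<subseteq> Fp" unfolding NZ_def Fp_def by (rule PiE_mono) auto
    ultimately show ?thesis unfolding S_def by auto
  qed
  have cS: "card S = fact p * (p - 1) ^ p"
    unfolding S_def card_cartesian_product q_def by (simp add: card_Perm card_NZ)
  have cB: "card (B h) = card S" if h: "h \<in> High" for h
  proof -
    have bij: "bij_betw (\<lambda>l. Phi q (PO {..<L} l + PO {L..n} h)) Low (Fp \<times> Fp)"
      using fiber[OF p L_def, of "PO {L..n} h"] unfolding Low_def Fp_def q_def .
    have "bij_betw (\<lambda>l. Phi q (PO {..<L} l + PO {L..n} h))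
            {l \<in> Low. Phi q (PO {..<L} l + PO {L..n} h) \<in> S} S"
      by (rule bij_restrict_to[OF bij Sub])
    moreover have "{l \<in> Low. Phi q (PO {..<L} l + PO {L..n} h) \<in> S} = B h"
      unfolding B_def S_def PO_merge using good_Phi[OF q0] by simp
    ultimately show ?thesis using bij_betw_same_card by metis
  qed
  have bij: "bij_betw (\<lambda>(h, l). merge l h) (Sigma High B) T"
  proof (rule bij_betwI[where g = "\<lambda>b. (restrict b {L..n}, restrict b {..<L})"])
    show "(\<lambda>(h, l). merge l h) \<in> Sigma High B \<rightarrow> T"
    proof
      fix x assume "x \<in> Sigma High B"
      then obtain h l where x: "x = (h, l)" "h \<in> High" "l \<in> B h" by auto
      have l: "l \<in> Low" "good q (PO {..n} (merge l h))" using x(3) unfolding B_def by auto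
      have "merge l h \<in> coeff_vectors n q"
        using l(1) x(2) Ln unfolding coeff_vectors_def Low_def High_def merge_def
        by (auto simp: PiE_def Pi_def extensional_def)
      then show "(\<lambda>(h, l). merge l h) x \<in> T" unfolding T_def x(1) using l(2) by simp
    qed
    have mg: "merge (restrict b {..<L}) (restrict b {L..n}) = b" if b: "b \<in> coeff_vectors n q" for b
    proof
      fix k
      have "b k = undefined" if "\<not> k \<le> n" using b that unfolding coeff_vectors_def
        by (auto simp: PiE_def extensional_def)
      then show "merge (restrict b {..<L}) (restrict b {L..n}) k = b k"
        unfolding merge_def by auto
    qed
    show "(\<lambda>b. (restrict b {L..n}, restrict b {..<L})) \<in> T \<rightarrow> Sigma High B"
    proof
      fix b assume "b \<in> T"
      then have b: "b \<in> coeff_vectors n q" "good q (PO {..n} b)" unfolding T_def by auto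
      have "restrict b {L..n} \<in> High" using b(1) unfolding High_def coeff_vectors_def by auto
      moreover have "restrict b {..<L} \<in> Low" using b(1) Ln unfolding Low_def coeff_vectors_def
        by (auto simp: PiE_def Pi_def)
      moreover have "good q (PO {..n} (merge (restrict b {..<L}) (restrict b {L..n})))"
        using b mg by simp
      ultimately show "(\<lambda>b. (restrict b {L..n}, restrict b {..<L})) b \<in> Sigma High B"
        unfolding B_def by simp
    qed
    show "(\<lambda>b. (restrict b {L..n}, restrict b {..<L})) ((\<lambda>(h, l). merge l h) x) = x"
      if xin: "x \<in> Sigma High B" for x
    proof -
      obtain h l where x: "x = (h, l)" "h \<in> High" "l \<in> B h" using xin by blast
      have l: "l \<in> Low" using x(3) unfolding B_def by auto
      have 1: "restrict (merge l h) {L..n} = h"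
      proof
        fix k show "restrict (merge l h) {L..n} k = h k"
          using x(2) unfolding High_def merge_def by (auto simp: PiE_def extensional_def)
      qed
      have 2: "restrict (merge l h) {..<L} = l"
      proof
        fix k show "restrict (merge l h) {..<L} k = l k"
          using l unfolding Low_def merge_def by (auto simp: PiE_def extensional_def)
      qed
      show ?thesis unfolding x(1) using 1 2 by simp
    qed
    show "(\<lambda>(h, l). merge l h) ((\<lambda>b. (restrict b {L..n}, restrict b {..<L})) b) = b"
      if "b \<in> T" for b
      using mg that unfolding T_def by simp
  qed
  have "card T = card (Sigma High B)" using bij_betw_same_card[OF bij] by simp
  also have "\<dots> = (\<Sum>h\<in>High. card (B h))"
    by (rule card_SigmaI) (auto simp: High_def B_def Low_def finite_PiE)
  also have "\<dots> = (\<Sum>h\<in>High. card S)" using cB by simp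
  also have "\<dots> = card High * card S" by simp
  also have "card High = p ^ (Suc n - 2 * p)" unfolding High_def q_def L_def
    by (simp add: card_funcsetE)
  finally show ?thesis unfolding T_def q_def cS .
qed

theorem mainTheorem13:
  fixes p d n :: nat
  assumes "prime p" and "d \<ge> 2" and "n \<ge> 2 * p - 1"
  shows "real (N_pp n (int p ^ d)) / real (N_p n (int p ^ d))
           = real ((p - 1) ^ p * fact (p - 1)) / real (p ^ (2 * p - 1))"
proof -
  have pi: "prime (int p)" using assms(1) by (simp add: prime_nat_int_transfer)
  have p2: "p \<ge> 2" using assms(1) prime_ge_2_nat by blast
  have n2: "2 * p \<le> Suc n" using assms(3) p2 by linarith
  have "N_pp n (int p ^ d) = card {a \<in> coeff_vectors n (int p ^ d). good (int p) (PO {..n} a)}"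
    unfolding N_pp_def coeff_eval_PO criterion[OF pi assms(2)] ..
  also have "\<dots> = card {b \<in> coeff_vectors n (int p). good (int p) (PO {..n} b)} * nat (int p) ^ ((d-1) * Suc n)"
    using count_lift[OF pi, of d n] assms(2) by simp
  also have "\<dots> = p ^ (Suc n - 2 * p) * (fact p * (p - 1) ^ p) * p ^ ((d-1) * Suc n)"
    using count_low[OF assms(1) n2] by simp
  finally have A: "N_pp n (int p ^ d) = p ^ (Suc n - 2 * p) * (fact p * (p - 1) ^ p) * p ^ ((d-1) * Suc n)" .
  have B: "N_p n (int p ^ d) = p ^ (d * Suc n)"
    unfolding N_p_def by (simp add: card_cv nat_power_eq power_mult power_add)
  have fp: "(fact p :: nat) = p * fact (p - 1)" using fact_reduce[where 'a=nat, of p] p2 by simp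
  have ex: "(Suc n - 2 * p) + (d-1) * Suc n + (2 * p - 1) + 1 = d * Suc n"
  proof -
    have "d * Suc n = (d-1) * Suc n + Suc n" using assms(2) by (cases d) auto
    then show ?thesis using n2 p2 by linarith
  qed
  have key: "N_pp n (int p ^ d) * p ^ (2 * p - 1) = (p - 1) ^ p * fact (p - 1) * N_p n (int p ^ d)"
  proof -
    have "N_pp n (int p ^ d) * p ^ (2 * p - 1)
        = (p ^ (Suc n - 2 * p) * p ^ ((d-1) * Suc n) * p ^ (2 * p - 1) * p) * ((p - 1) ^ p * fact (p - 1))"
      unfolding A fp by (simp add: algebra_simps)
    also have "p ^ (Suc n - 2 * p) * p ^ ((d-1) * Suc n) * p ^ (2 * p - 1) * p = p ^ (d * Suc n)"
      unfolding ex[symmetric] by (simp add: power_add)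
    finally show ?thesis unfolding B by (simp add: algebra_simps)
  qed
  have pos1: "real (N_p n (int p ^ d)) > 0" unfolding B using p2 by simp
  have pos2: "real (p ^ (2 * p - 1)) > 0" using p2 by simp
  have eq: "real (N_pp n (int p ^ d)) * real (p ^ (2 * p - 1)) = real ((p - 1) ^ p * fact (p - 1)) * real (N_p n (int p ^ d))"
    using arg_cong[OF key, of real] by (simp only: of_nat_mult)
  have ne: "real (N_p n (int p ^ d)) \<noteq> 0" "real (p ^ (2 * p - 1)) \<noteq> 0" using pos1 pos2 by linarith+
  show ?thesis unfolding frac_eq_eq[OF ne] by (rule eq)
qed

end
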